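(* Let $G$ be an undirected weighted graph with at least one edge of positive weight. Then $\mathsf{OPT}^{\text{max-min}}(G)=\frac{\mathsf{OPT}_2(G)}{2}$.
   Context: Weighted modularity: $G=(V,E,\ell)$ is an undirected graph with nonnegative edge weights $\ell$; $a_{u,v}=\ell(u,v)$ if $\{u,v\}\in E$ and $0$ otherwise; $d_u=\sum_{v}a_{u,v}$ is the weighted degree, and $m=\frac12\sum_v d_v$. For $C\subseteq V$, $\mathsf M(C)=\frac{1}{2m}\sum_{u\in C}\sum_{v\in C}\big(a_{u,v}-\frac{d_ud_v}{2m}\big)$, the sum over all ordered pairs including $u=v$. A clustering is a partition $\mathcal S$ of $V$ into nonempty clusters. The sum modularity is $\mathsf M(\mathcal S)=\sum_{C\in\mathcal S}\mathsf M(C)$ and $\mathsf{OPT}_2$ is its maximum over clusterings with at most two clusters. The max-min modularity is $\mathsf M^{\text{max-min}}(\mathcal S)=\min_{C\in\mathcal S}\mathsf M(C)$, and $\mathsf{OPT}^{\text{max-min}}$ is its maximum over all clusterings (any number of clusters). *)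

theory Defs
  imports Main "HOL-Library.Disjoint_Sets" Complex_Main
begin

text \<open>A weighted undirected graph on a finite vertex set V is given by its
  weighted adjacency function a (a u v = weight of edge {u,v}, 0 if no edge);
  a is symmetric and nonnegative on V.\<close>

definition wdeg :: "'a set \<Rightarrow> ('a \<Rightarrow> 'a \<Rightarrow> real) \<Rightarrow> 'a \<Rightarrow> real" where
  "wdeg V a u = (\<Sum>v\<in>V. a u v)"

definition total_weight :: "'a set \<Rightarrow> ('a \<Rightarrow> 'a \<Rightarrow> real) \<Rightarrow> real" where
  "total_weight V a = (\<Sum>v\<in>V. wdeg V a v) / 2"

definition modularity :: "'a set \<Rightarrow> ('a \<Rightarrow> 'a \<Rightarrow> real) \<Rightarrow> 'a set \<Rightarrow> real" where
  "modularity V a C =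
     (let m = total_weight V a in
      (1 / (2 * m)) * (\<Sum>u\<in>C. \<Sum>v\<in>C. a u v - wdeg V a u * wdeg V a v / (2 * m)))"

definition clustering :: "'a set \<Rightarrow> 'a set set \<Rightarrow> bool" where
  "clustering V S = partition_on V S"

definition sum_modularity :: "'a set \<Rightarrow> ('a \<Rightarrow> 'a \<Rightarrow> real) \<Rightarrow> 'a set set \<Rightarrow> real" where
  "sum_modularity V a S = (\<Sum>C\<in>S. modularity V a C)"

definition maxmin_modularity :: "'a set \<Rightarrow> ('a \<Rightarrow> 'a \<Rightarrow> real) \<Rightarrow> 'a set set \<Rightarrow> real" where
  "maxmin_modularity V a S = Min (modularity V a ` S)"

definition OPT2 :: "'a set \<Rightarrow> ('a \<Rightarrow> 'a \<Rightarrow> real) \<Rightarrow> real" where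
  "OPT2 V a = Max {sum_modularity V a S | S. clustering V S \<and> card S \<le> 2}"

definition OPT_maxmin :: "'a set \<Rightarrow> ('a \<Rightarrow> 'a \<Rightarrow> real) \<Rightarrow> real" where
  "OPT_maxmin V a = Max {maxmin_modularity V a S | S. clustering V S}"

end

theory Submission
  imports Defs
begin

lemma mod_compl:
  fixes V :: "'a set" and a :: "'a \<Rightarrow> 'a \<Rightarrow> real"
  assumes fin: "finite V" and sym: "\<And>u v. u \<in> V \<Longrightarrow> v \<in> V \<Longrightarrow> a u v = a v u"
    and CV: "C \<subseteq> V"
  shows "modularity V a (V - C) = modularity V a C"
proof -
  define m where "m = total_weight V a"
  define d where "d = wdeg V a"
  define f where "f u v = a u v - d u * d v / (2*m)" for u v
  have mod_eq: "modularity V a X = (1/(2*m)) * (\<Sum>u\<in>X. \<Sum>v\<in>X. f u v)" for X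
    unfolding modularity_def m_def f_def d_def Let_def by simp
  show ?thesis
  proof (cases "m = 0")
    case True thus ?thesis by (simp add: mod_eq)
  next
    case False
    have sd: "(\<Sum>v\<in>V. d v) = 2*m" unfolding m_def total_weight_def d_def by simp
    have row: "(\<Sum>v\<in>V. f u v) = 0" for u
    proof -
      have au: "(\<Sum>v\<in>V. a u v) = d u" by (simp add: d_def wdeg_def)
      have "(\<Sum>v\<in>V. f u v) = (\<Sum>v\<in>V. a u v) - d u * (\<Sum>v\<in>V. d v) / (2*m)"
        unfolding f_def by (simp add: sum_subtractf sum_divide_distrib[symmetric] sum_distrib_left)
      also have "\<dots> = d u - d u" using False by (simp add: sd au)
      also have "\<dots> = 0" by simp
      finally show ?thesis .
    qed
    have fsym: "f u v = f v u" if "u \<in> V" "v \<in> V" for u v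
      unfolding f_def using sym[OF that] by (simp add: mult.commute)
    define D where "D = V - C"
    have finC: "finite C" using fin CV finite_subset by blast
    have finD: "finite D" using fin D_def by simp
    have split: "(\<Sum>v\<in>V. g v) = (\<Sum>v\<in>D. g v) + (\<Sum>v\<in>C. g v)" for g :: "'a \<Rightarrow> real"
      unfolding D_def using sum.subset_diff[OF CV fin] by simp
    have split2: "(\<Sum>v\<in>V. g v) = (\<Sum>v\<in>C. g v) + (\<Sum>v\<in>D. g v)" for g :: "'a \<Rightarrow> real"
      using split[of g] by simp
    have cc: "(\<Sum>u\<in>C. \<Sum>v\<in>C. f u v) = - (\<Sum>u\<in>C. \<Sum>v\<in>D. f u v)"
    proof -
      have "(\<Sum>v\<in>C. f u v) = - (\<Sum>v\<in>D. f u v)" for u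
        using split[of "f u"] row[of u] by simp
      thus ?thesis by (simp add: sum_negf)
    qed
    have dd: "(\<Sum>u\<in>D. \<Sum>v\<in>D. f u v) = - (\<Sum>u\<in>D. \<Sum>v\<in>C. f u v)"
    proof -
      have "(\<Sum>v\<in>D. f u v) = - (\<Sum>v\<in>C. f u v)" for u
        using split2[of "f u"] row[of u] by simp
      thus ?thesis by (simp add: sum_negf)
    qed
    have dc: "(\<Sum>u\<in>D. \<Sum>v\<in>C. f u v) = (\<Sum>u\<in>C. \<Sum>v\<in>D. f u v)"
    proof -
      have "(\<Sum>u\<in>D. \<Sum>v\<in>C. f u v) = (\<Sum>v\<in>C. \<Sum>u\<in>D. f u v)" by (rule sum.swap)
      also have "\<dots> = (\<Sum>u\<in>C. \<Sum>v\<in>D. f u v)"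
        apply (rule sum.cong[OF refl], rule sum.cong[OF refl])
        using CV D_def fsym by auto
      finally show ?thesis .
    qed
    show ?thesis unfolding mod_eq D_def[symmetric] using cc dd dc by simp
  qed
qed

theorem lemma12:
  fixes V :: "'a set" and a :: "'a \<Rightarrow> 'a \<Rightarrow> real"
  assumes "finite V"
    and "\<And>u v. u \<in> V \<Longrightarrow> v \<in> V \<Longrightarrow> a u v \<ge> 0"
    and "\<And>u v. u \<in> V \<Longrightarrow> v \<in> V \<Longrightarrow> a u v = a v u"
    and "\<exists>u\<in>V. \<exists>v\<in>V. a u v > 0"
  shows "OPT_maxmin V a = OPT2 V a / 2"
proof -
  note fin = assms(1) and sym = assms(3)
  let ?M = "modularity V a"
  have Vne: "V \<noteq> {}" using assms(4) by auto
  have MV0: "?M V = 0"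
    using mod_compl[where C=V, OF fin sym] by (simp add: modularity_def)
  define A2 where "A2 = {sum_modularity V a S | S. clustering V S \<and> card S \<le> 2}"
  define Am where "Am = {maxmin_modularity V a S | S. clustering V S}"
  have clsub: "{S. clustering V S} \<subseteq> Pow (Pow V)"
    unfolding clustering_def partition_on_def by auto
  have fincl: "finite {S. clustering V S}"
    using finite_subset[OF clsub] fin by auto
  have finA2: "finite A2"
  proof -
    have "A2 \<subseteq> sum_modularity V a ` {S. clustering V S}" unfolding A2_def by auto
    thus ?thesis using fincl finite_subset by blast
  qed
  have finAm: "finite Am"
  proof -
    have "Am \<subseteq> maxmin_modularity V a ` {S. clustering V S}" unfolding Am_def by auto
    thus ?thesis using fincl finite_subset by blast
  qed
  have clV: "clustering V {V}" unfolding clustering_def using partition_on_space[OF Vne] .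
  have key: "2 * ?M C \<in> A2" if "C \<subseteq> V" "C \<noteq> {}" for C
  proof (cases "C = V")
    case True
    have "sum_modularity V a {V} = 2 * ?M C" using True MV0 by (simp add: sum_modularity_def)
    thus ?thesis unfolding A2_def using clV by force
  next
    case False
    have ne: "C \<noteq> V - C" using that by auto
    have cl: "clustering V {C, V - C}"
      unfolding clustering_def partition_on_def disjoint_def using that False by auto
    have "sum_modularity V a {C, V - C} = 2 * ?M C"
      using ne mod_compl[OF fin sym that(1)] by (simp add: sum_modularity_def)
    moreover have "card {C, V - C} \<le> 2" using ne by simp
    ultimately show ?thesis unfolding A2_def using cl by force
  qed
  have A2ne: "A2 \<noteq> {}" using key[of V] Vne by auto
  have le1: "OPT_maxmin V a \<le> OPT2 V a / 2"
  proof -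
    have "x \<le> OPT2 V a / 2" if xA: "x \<in> Am" for x
    proof -
      obtain S where S: "clustering V S" and x: "x = maxmin_modularity V a S"
        using xA unfolding Am_def by blast
      have pS: "\<Union>S = V" "{} \<notin> S" "disjoint S" using S unfolding clustering_def partition_on_def by auto
      then obtain C where C: "C \<in> S" using Vne by auto
      have finS: "finite S" using pS(1) fin finite_UnionD by blast
      have "x \<le> ?M C" unfolding x maxmin_modularity_def using finS C by simp
      moreover have "2 * ?M C \<le> OPT2 V a"
        unfolding OPT2_def A2_def[symmetric] using key[of C] C pS finA2 by (auto intro!: Max_ge)
      ultimately show ?thesis by simp
    qed
    moreover have "Am \<noteq> {}" unfolding Am_def using clV by auto
    ultimately show ?thesis unfolding OPT_maxmin_def Am_def[symmetric] using finAm by simp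
  qed
  have le2: "OPT2 V a / 2 \<le> OPT_maxmin V a"
  proof -
    have "OPT2 V a \<in> A2" unfolding OPT2_def A2_def[symmetric] using finA2 A2ne by (rule Max_in)
    then obtain S where S: "clustering V S" "card S \<le> 2" and o: "OPT2 V a = sum_modularity V a S"
      unfolding A2_def by auto
    have pS: "\<Union>S = V" "{} \<notin> S" "disjoint S" using S unfolding clustering_def partition_on_def by auto
    have finS: "finite S" using pS(1) fin finite_UnionD by blast
    have Sne: "S \<noteq> {}" using pS Vne by auto
    obtain C where C: "C \<in> S" "maxmin_modularity V a S = ?M C"
    proof -
      have "Min (?M ` S) \<in> ?M ` S" using finS Sne by (intro Min_in) auto
      thus ?thesis using that unfolding maxmin_modularity_def by auto
    qed
    have "sum_modularity V a S \<le> 2 * ?M C"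
    proof -
      have "card S = 1 \<or> card S = 2" using S(2) finS Sne by (simp add: card_gt_0_iff le_Suc_eq)
        (metis card_0_eq finS Sne le_Suc_eq le_zero_eq numeral_2_eq_2 One_nat_def)
      thus ?thesis
      proof
        assume "card S = 1"
        then obtain X where X: "S = {X}" by (auto simp: card_Suc_eq)
        hence "X = V" "C = V" using pS C by auto
        thus ?thesis using X MV0 by (simp add: sum_modularity_def)
      next
        assume "card S = 2"
        then obtain X Y where XY: "S = {X, Y}" "X \<noteq> Y" by (auto simp: card_Suc_eq numeral_2_eq_2)
        have "X \<inter> Y = {}" using pS(3) XY unfolding disjoint_def by auto
        hence Y: "Y = V - X" and XV: "X \<subseteq> V" using pS(1) XY by auto
        have eq: "?M Y = ?M X" using mod_compl[OF fin sym XV] Y by simp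
        have "?M C = ?M X" using C XY eq by auto
        thus ?thesis using XY eq by (simp add: sum_modularity_def)
      qed
    qed
    moreover have "maxmin_modularity V a S \<le> OPT_maxmin V a"
      unfolding OPT_maxmin_def Am_def[symmetric] using finAm S unfolding Am_def by (auto intro!: Max_ge)
    ultimately show ?thesis using o C by simp
  qed
  show ?thesis using le1 le2 by simp
qed

end
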